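(* Let $n_1\geq n_2\geq 2$ be integers and let $\delta=1$ if $n_1$ is even and $n_2$ is odd, and $\delta=0$ otherwise. Define $f:[n_1]\times[n_2]\to[n_1n_2]$ by $$f(i,j)=\begin{cases}(i-1)n_2+j & i \text{ odd},\ j\text{ odd},\\ (i-1)n_2+(n_2+1-j) & i\text{ even},\ j\text{ even},\\ (n_1-i)n_2+j+\delta & i\text{ odd},\ j\text{ even},\\ (n_1-i)n_2+(n_2+1-j+\delta) & i\text{ even},\ j\text{ odd}.\end{cases}$$ Then $f$ is a $Q_2$-magic vertex labeling of $\textsc{Grid}(n_1,n_2)$ with $Q_2$-magic sum $2(n_1n_2+1)$ if $n_1$ is odd or $n_2$ is even, and $2(n_1n_2+2)$ if $n_1$ is even and $n_2$ is odd.
   Context: $[k]=\{1,\ldots,k\}$. $\textsc{Grid}(n_1,n_2)$ is the graph with vertex set $[n_1]\times[n_2]$ in which $(i,j)$ and $(i',j')$ are adjacent iff $|i-i'|+|j-j'|=1$. $Q_2$ is the 4-cycle $\textsc{Grid}(2,2)$. A bijection $f:V\to\{1,\ldots,|V|\}$ on the vertex set of a graph $G=(V,E)$ is an $H$-magic vertex labeling if there is a constant $c$ (the $H$-magic sum) with $\sum_{v\in V(H')}f(v)=c$ for every subgraph $H'\subseteq G$ isomorphic to $H$. *)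

theory Defs
  imports Main
begin

text \<open>A simple graph is a pair (V, E) of a vertex set and a set of 2-element edges.\<close>
type_synonym 'a graph = "'a set \<times> 'a set set"

definition grid :: "nat \<Rightarrow> nat \<Rightarrow> (nat \<times> nat) graph" where
  "grid n1 n2 = ({1..n1} \<times> {1..n2},
     {{u, v} | u v. u \<in> {1..n1} \<times> {1..n2} \<and> v \<in> {1..n1} \<times> {1..n2} \<and>
        \<bar>int (fst u) - int (fst v)\<bar> + \<bar>int (snd u) - int (snd v)\<bar> = 1})"

definition Q2 :: "(nat \<times> nat) graph" where
  "Q2 = grid 2 2"

definition subgraph :: "'a graph \<Rightarrow> 'a graph \<Rightarrow> bool" where
  "subgraph H G \<longleftrightarrow> fst H \<subseteq> fst G \<and> snd H \<subseteq> snd G \<and> (\<forall>e \<in> snd H. e \<subseteq> fst H)"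

definition graph_iso :: "'a graph \<Rightarrow> 'b graph \<Rightarrow> bool" where
  "graph_iso G H \<longleftrightarrow> (\<exists>h. bij_betw h (fst G) (fst H) \<and>
     (\<forall>x \<in> fst G. \<forall>y \<in> fst G. {x, y} \<in> snd G \<longleftrightarrow> {h x, h y} \<in> snd H))"

definition magic_labeling :: "'a graph \<Rightarrow> 'b graph \<Rightarrow> ('a \<Rightarrow> nat) \<Rightarrow> nat \<Rightarrow> bool" where
  "magic_labeling G H f c \<longleftrightarrow> bij_betw f (fst G) {1..card (fst G)} \<and>
     (\<forall>H'. subgraph H' G \<and> graph_iso H' H \<longrightarrow> (\<Sum>v \<in> fst H'. f v) = c)"

definition lab :: "nat \<Rightarrow> nat \<Rightarrow> nat \<times> nat \<Rightarrow> nat" where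
  "lab n1 n2 = (\<lambda>(i, j).
     (let \<delta> = (if even n1 \<and> odd n2 then 1 else 0) in
      if odd i \<and> odd j then (i - 1) * n2 + j
      else if even i \<and> even j then (i - 1) * n2 + (n2 + 1 - j)
      else if odd i \<and> even j then (n1 - i) * n2 + j + \<delta>
      else (n1 - i) * n2 + (n2 + 1 - j + \<delta>)))"

end

theory Submission
  imports Defs
begin


definition dl :: "nat \<Rightarrow> nat \<Rightarrow> int" where
  "dl n1 n2 = (if even n1 \<and> odd n2 then 1 else 0)"

lemma lab_int:
  assumes "1 \<le> i" "i \<le> n1" "1 \<le> j" "j \<le> n2"
  shows "int (lab n1 n2 (i,j)) =
     (if odd i \<and> odd j then (int i - 1) * int n2 + int j
      else if even i \<and> even j then (int i - 1) * int n2 + (int n2 + 1 - int j)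
      else if odd i \<and> even j then (int n1 - int i) * int n2 + int j + dl n1 n2
      else (int n1 - int i) * int n2 + (int n2 + 1 - int j + dl n1 n2))"
  using assms unfolding lab_def dl_def Let_def
  by (auto simp: of_nat_diff)

lemma magic_sum:
  assumes "1 \<le> p" "p < n1" "1 \<le> q" "q < n2"
  shows "lab n1 n2 (p,q) + lab n1 n2 (Suc p,q) + lab n1 n2 (p,Suc q) + lab n1 n2 (Suc p,Suc q)
     = (if odd n1 \<or> even n2 then 2 * (n1 * n2 + 1) else 2 * (n1 * n2 + 2))"
proof -
  have "int (lab n1 n2 (p,q) + lab n1 n2 (Suc p,q) + lab n1 n2 (p,Suc q) + lab n1 n2 (Suc p,Suc q))
     = 2 * (int n1 * int n2 + 1 + dl n1 n2)"
    using assms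
    apply (simp only: of_nat_add)
    apply (subst lab_int, simp_all)+
    apply (cases "even p"; cases "even q"; simp add: algebra_simps)
    done
  then have "int (lab n1 n2 (p,q) + lab n1 n2 (Suc p,q) + lab n1 n2 (p,Suc q) + lab n1 n2 (Suc p,Suc q))
     = int (if odd n1 \<or> even n2 then 2 * (n1 * n2 + 1) else 2 * (n1 * n2 + 2))"
    unfolding dl_def by (auto split: if_splits)
  then show ?thesis by (simp only: of_nat_eq_iff)
qed


lemma key_divmod:
  fixes n :: nat
  assumes "q*n + r = q'*n + r'" "0<r" "r\<le>n" "0<r'" "r'\<le>n"
  shows "q = q' \<and> r = r'"
proof -
  obtain x where x: "r = Suc x" using assms(2) by (cases r) auto
  obtain x' where x': "r' = Suc x'" using assms(4) by (cases r') auto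
  have n: "0 < n" using assms by simp
  have xl: "x < n" "x' < n" using x x' assms by auto
  have e: "x + q*n = x' + q'*n" using assms x x' by simp
  have "(x + q*n) div n = q" "(x' + q'*n) div n = q'" "(x + q*n) mod n = x" "(x' + q'*n) mod n = x'"
    using n xl by simp_all
  then show ?thesis using e x x' by metis
qed

definition qf :: "nat \<Rightarrow> nat \<Rightarrow> nat \<times> nat \<Rightarrow> nat" where
  "qf n1 n2 = (\<lambda>(i,j). if odd i \<and> odd j then i-1 else if even i \<and> even j then i-1
     else if odd i then n1-i else if even n1 \<and> odd n2 \<and> j = 1 then n1-i+1 else n1-i)"
definition rf :: "nat \<Rightarrow> nat \<Rightarrow> nat \<times> nat \<Rightarrow> nat" where
  "rf n1 n2 = (\<lambda>(i,j). if odd i \<and> odd j then j else if even i \<and> even j then n2+1-j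
     else if odd i then j + (if even n1 \<and> odd n2 then 1 else 0)
     else if even n1 \<and> odd n2 \<and> j = 1 then 1 else n2+1-j+(if even n1 \<and> odd n2 then 1 else 0))"

lemma lab_qr:
  assumes "1 \<le> i" "i \<le> n1" "1 \<le> j" "j \<le> n2"
  shows "lab n1 n2 (i,j) = qf n1 n2 (i,j) * n2 + rf n1 n2 (i,j)
     \<and> 0 < rf n1 n2 (i,j) \<and> rf n1 n2 (i,j) \<le> n2 \<and> qf n1 n2 (i,j) < n1"
  using assms unfolding lab_def qf_def rf_def Let_def
  apply (cases "even i"; cases "even j"; cases "even n1"; cases "even n2"; cases "j = 1")
  apply (simp_all add: algebra_simps)
  apply presburger+
  done

lemma X:
  fixes i j i' j' n1 n2 d Q R :: nat
  assumes bnd: "1 \<le> i" "i \<le> n1" "1 \<le> j" "j \<le> n2" "1 \<le> i'" "i' \<le> n1" "1 \<le> j'" "j' \<le> n2"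
   and d: "(d = 1 \<and> even n1 \<and> odd n2) \<or> (d = 0 \<and> \<not>(even n1 \<and> odd n2))"
   and h: "(odd i \<and> odd j \<and> even Q \<and> odd R \<and> Q=i-1 \<and> R=j)
     \<or> (even i \<and> even j \<and> odd Q \<and> (even R = odd n2) \<and> Q=i-1 \<and> R=n2+1-j)
     \<or> (odd i \<and> even j \<and> (even Q = odd n1) \<and> (even R = (d = 0)) \<and> Q=n1-i \<and> R=j+d)
     \<or> (even i \<and> odd j \<and> \<not>(d=1\<and>j=1) \<and> (even Q = even n1) \<and> (even R = (d = 1 \<or> even n2)) \<and> Q = n1-i \<and> R = n2+1-j+d)
     \<or> (even i \<and> j=1 \<and> d=1 \<and> odd Q \<and> Q=n1-i+1 \<and> R=1)"
   and h': "(odd i' \<and> odd j' \<and> even Q \<and> odd R \<and> Q=i'-1 \<and> R=j')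
     \<or> (even i' \<and> even j' \<and> odd Q \<and> (even R = odd n2) \<and> Q=i'-1 \<and> R=n2+1-j')
     \<or> (odd i' \<and> even j' \<and> (even Q = odd n1) \<and> (even R = (d = 0)) \<and> Q=n1-i' \<and> R=j'+d)
     \<or> (even i' \<and> odd j' \<and> \<not>(d=1\<and>j'=1) \<and> (even Q = even n1) \<and> (even R = (d = 1 \<or> even n2)) \<and> Q = n1-i' \<and> R = n2+1-j'+d)
     \<or> (even i' \<and> j'=1 \<and> d=1 \<and> odd Q \<and> Q=n1-i'+1 \<and> R=1)"
  shows "i = i' \<and> j = j'"
proof -
  from d consider "d = 1" "even n1" "odd n2" | "d = 0" "odd n1" | "d = 0" "even n2" by blast
  then show ?thesis
  proof cases
    case 1
    show ?thesis using h h' bnd 1 by (elim disjE conjE; ((simp; fail) | (intro conjI; linarith)))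
  next
    case 2
    show ?thesis using h h' bnd 2 by (elim disjE conjE; ((simp; fail) | (intro conjI; linarith)))
  next
    case 3
    show ?thesis using h h' bnd 3 by (elim disjE conjE; ((simp; fail) | (intro conjI; linarith)))
  qed
qed

lemma lab_cls:
  assumes "1 \<le> i" "i \<le> n1" "1 \<le> j" "j \<le> n2"
  defines "d \<equiv> (if even n1 \<and> odd n2 then 1 else 0::nat)"
  shows "\<exists>Q R. lab n1 n2 (i,j) = Q * n2 + R \<and> 0 < R \<and> R \<le> n2 \<and> Q < n1 \<and>
    ((odd i \<and> odd j \<and> even Q \<and> odd R \<and> Q=i-1 \<and> R=j)
     \<or> (even i \<and> even j \<and> odd Q \<and> (even R = odd n2) \<and> Q=i-1 \<and> R=n2+1-j)
     \<or> (odd i \<and> even j \<and> (even Q = odd n1) \<and> (even R = (d = 0)) \<and> Q=n1-i \<and> R=j+d)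
     \<or> (even i \<and> odd j \<and> \<not>(d=1\<and>j=1) \<and> (even Q = even n1) \<and> (even R = (d = 1 \<or> even n2)) \<and> Q = n1-i \<and> R = n2+1-j+d)
     \<or> (even i \<and> j=1 \<and> d=1 \<and> odd Q \<and> Q=n1-i+1 \<and> R=1))"
proof (intro exI conjI)
  show "lab n1 n2 (i,j) = qf n1 n2 (i,j) * n2 + rf n1 n2 (i,j)" "0 < rf n1 n2 (i,j)"
    "rf n1 n2 (i,j) \<le> n2" "qf n1 n2 (i,j) < n1" using lab_qr[OF assms(1-4)] by auto
  show "((odd i \<and> odd j \<and> even (qf n1 n2 (i,j)) \<and> odd (rf n1 n2 (i,j)) \<and> qf n1 n2 (i,j)=i-1 \<and> rf n1 n2 (i,j)=j)
     \<or> (even i \<and> even j \<and> odd (qf n1 n2 (i,j)) \<and> (even (rf n1 n2 (i,j)) = odd n2) \<and> qf n1 n2 (i,j)=i-1 \<and> rf n1 n2 (i,j)=n2+1-j)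
     \<or> (odd i \<and> even j \<and> (even (qf n1 n2 (i,j)) = odd n1) \<and> (even (rf n1 n2 (i,j)) = (d = 0)) \<and> qf n1 n2 (i,j)=n1-i \<and> rf n1 n2 (i,j)=j+d)
     \<or> (even i \<and> odd j \<and> \<not>(d=1\<and>j=1) \<and> (even (qf n1 n2 (i,j)) = even n1) \<and> (even (rf n1 n2 (i,j)) = (d = 1 \<or> even n2)) \<and> qf n1 n2 (i,j) = n1-i \<and> rf n1 n2 (i,j) = n2+1-j+d)
     \<or> (even i \<and> j=1 \<and> d=1 \<and> odd (qf n1 n2 (i,j)) \<and> qf n1 n2 (i,j)=n1-i+1 \<and> rf n1 n2 (i,j)=1))"
    using assms(1-4) unfolding qf_def rf_def d_def
    by (cases "even i"; cases "even j"; cases "even n1"; cases "even n2"; cases "j = 1"; simp)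
qed

lemma lab_inj:
  shows "inj_on (lab n1 n2) ({1..n1} \<times> {1..n2})"
proof (rule inj_onI, clarify)
  fix i j i' j'
  assume a: "i \<in> {1..n1}" "j \<in> {1..n2}" "i' \<in> {1..n1}" "j' \<in> {1..n2}"
     and e: "lab n1 n2 (i,j) = lab n1 n2 (i',j')"
  define d where "d = (if even n1 \<and> odd n2 then 1 else 0::nat)"
  obtain Q R where h: "lab n1 n2 (i,j) = Q * n2 + R" "0 < R" "R \<le> n2" and
    h1: "((odd i \<and> odd j \<and> even Q \<and> odd R \<and> Q=i-1 \<and> R=j)
     \<or> (even i \<and> even j \<and> odd Q \<and> (even R = odd n2) \<and> Q=i-1 \<and> R=n2+1-j)
     \<or> (odd i \<and> even j \<and> (even Q = odd n1) \<and> (even R = (d = 0)) \<and> Q=n1-i \<and> R=j+d)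
     \<or> (even i \<and> odd j \<and> \<not>(d=1\<and>j=1) \<and> (even Q = even n1) \<and> (even R = (d = 1 \<or> even n2)) \<and> Q = n1-i \<and> R = n2+1-j+d)
     \<or> (even i \<and> j=1 \<and> d=1 \<and> odd Q \<and> Q=n1-i+1 \<and> R=1))"
    using lab_cls[of i n1 j n2] a unfolding d_def by auto
  obtain Q' R' where h': "lab n1 n2 (i',j') = Q' * n2 + R'" "0 < R'" "R' \<le> n2" and
    h2: "((odd i' \<and> odd j' \<and> even Q' \<and> odd R' \<and> Q'=i'-1 \<and> R'=j')
     \<or> (even i' \<and> even j' \<and> odd Q' \<and> (even R' = odd n2) \<and> Q'=i'-1 \<and> R'=n2+1-j')
     \<or> (odd i' \<and> even j' \<and> (even Q' = odd n1) \<and> (even R' = (d = 0)) \<and> Q'=n1-i' \<and> R'=j'+d)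
     \<or> (even i' \<and> odd j' \<and> \<not>(d=1\<and>j'=1) \<and> (even Q' = even n1) \<and> (even R' = (d = 1 \<or> even n2)) \<and> Q' = n1-i' \<and> R' = n2+1-j'+d)
     \<or> (even i' \<and> j'=1 \<and> d=1 \<and> odd Q' \<and> Q'=n1-i'+1 \<and> R'=1))"
    using lab_cls[of i' n1 j' n2] a unfolding d_def by auto
  have "Q = Q' \<and> R = R'" using key_divmod[of Q n2 R Q' R'] h h' e by simp
  then have h2': "((odd i' \<and> odd j' \<and> even Q \<and> odd R \<and> Q=i'-1 \<and> R=j')
     \<or> (even i' \<and> even j' \<and> odd Q \<and> (even R = odd n2) \<and> Q=i'-1 \<and> R=n2+1-j')
     \<or> (odd i' \<and> even j' \<and> (even Q = odd n1) \<and> (even R = (d = 0)) \<and> Q=n1-i' \<and> R=j'+d)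
     \<or> (even i' \<and> odd j' \<and> \<not>(d=1\<and>j'=1) \<and> (even Q = even n1) \<and> (even R = (d = 1 \<or> even n2)) \<and> Q = n1-i' \<and> R = n2+1-j'+d)
     \<or> (even i' \<and> j'=1 \<and> d=1 \<and> odd Q \<and> Q=n1-i'+1 \<and> R=1))" using h2 by simp
  have dd: "(d = 1 \<and> even n1 \<and> odd n2) \<or> (d = 0 \<and> \<not>(even n1 \<and> odd n2))" unfolding d_def by auto
  show "i = i' \<and> j = j'" using X[OF _ _ _ _ _ _ _ _ dd h1 h2'] a by auto
qed

lemma lab_bij:
  shows "bij_betw (lab n1 n2) ({1..n1} \<times> {1..n2}) {1..n1*n2}"
proof -
  have sub: "lab n1 n2 ` ({1..n1} \<times> {1..n2}) \<subseteq> {1..n1*n2}"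
  proof clarify
    fix i j assume a: "i \<in> {1..n1}" "j \<in> {1..n2}"
    then have h: "lab n1 n2 (i,j) = qf n1 n2 (i,j) * n2 + rf n1 n2 (i,j)" "0 < rf n1 n2 (i,j)"
      "rf n1 n2 (i,j) \<le> n2" "qf n1 n2 (i,j) < n1" using lab_qr[of i n1 j n2] by auto
    have "qf n1 n2 (i,j) \<le> n1 - 1" using h(4) by simp
    then have "qf n1 n2 (i,j) * n2 \<le> (n1 - 1) * n2" by (rule mult_le_mono1)
    then have "qf n1 n2 (i,j) * n2 + rf n1 n2 (i,j) \<le> (n1 - 1) * n2 + n2"
      using h(3) by linarith
    also have "\<dots> = n1*n2" using h(4) by (cases n1) auto
    finally show "lab n1 n2 (i,j) \<in> {1..n1*n2}" using h by simp
  qed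
  have "card (lab n1 n2 ` ({1..n1} \<times> {1..n2})) = card ({1..n1} \<times> {1..n2})"
    using lab_inj card_image by blast
  also have "\<dots> = card {1..n1*n2}" by (simp add: card_cartesian_product)
  finally have "lab n1 n2 ` ({1..n1} \<times> {1..n2}) = {1..n1*n2}"
    using sub by (simp add: card_subset_eq)
  then show ?thesis using lab_inj unfolding bij_betw_def by simp
qed


lemma grid_edge:
  assumes "{a,b} \<in> snd (grid n1 n2)"
  shows "a \<in> {1..n1} \<times> {1..n2} \<and> b \<in> {1..n1} \<times> {1..n2} \<and>
    \<bar>int (fst a) - int (fst b)\<bar> + \<bar>int (snd a) - int (snd b)\<bar> = 1"
  using assms unfolding grid_def by (auto simp: doubleton_eq_iff abs_minus_commute)

lemma adj_cases:
  fixes x y x' y' :: nat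
  assumes "\<bar>int x - int x'\<bar> + \<bar>int y - int y'\<bar> = 1"
  shows "(x' = Suc x \<and> y' = y) \<or> (x = Suc x' \<and> y' = y) \<or> (x' = x \<and> y' = Suc y) \<or> (x' = x \<and> y = Suc y')"
  using assms by arith

definition U :: "(int \<times> int) set" where "U = {(1,0),(-1,0),(0,1),(0,-1)}"
lemma unitU: "\<bar>x\<bar> + \<bar>y\<bar> = (1::int) \<Longrightarrow> (x=1 \<and> y=0) \<or> (x = -1 \<and> y = 0) \<or> (x = 0 \<and> y = 1) \<or> (x = 0 \<and> y = -1)" by arith
lemma fin:
  fixes ux uy vx vy wx wy :: int
  assumes "(ux=1 \<and> uy=0) \<or> (ux = -1 \<and> uy = 0) \<or> (ux = 0 \<and> uy = 1) \<or> (ux = 0 \<and> uy = -1)"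
   "(vx=1 \<and> vy=0) \<or> (vx = -1 \<and> vy = 0) \<or> (vx = 0 \<and> vy = 1) \<or> (vx = 0 \<and> vy = -1)"
   "(wx=1 \<and> wy=0) \<or> (wx = -1 \<and> wy = 0) \<or> (wx = 0 \<and> wy = 1) \<or> (wx = 0 \<and> wy = -1)"
   and z: "(-(ux+vx+wx), -(uy+vy+wy)) \<in> U"
   and n: "(ux+vx,uy+vy) \<noteq> (0,0)" "(vx+wx,vy+wy) \<noteq> (0,0)"
  shows "\<bar>ux+vx\<bar> = 1 \<and> \<bar>uy+vy\<bar> = 1 \<and> (ux = 0 \<or> vx = 0) \<and> (uy = 0 \<or> vy = 0)
     \<and> (wx = 0 \<or> ux+vx+wx = 0) \<and> (wy = 0 \<or> uy+vy+wy = 0)"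
  using assms(1-3) z n by (elim disjE conjE; simp add: U_def)

lemma coord:
  fixes a1 c1 :: nat
  assumes "\<bar>int a1 - int c1\<bar> = 1" "x = a1 \<or> x = c1"
  shows "x = min a1 c1 \<or> x = Suc (min a1 c1)"
  using assms by (auto simp: min_def)

lemma square:
  fixes a b c d :: "nat \<times> nat"
  assumes "\<bar>int (fst a) - int (fst b)\<bar> + \<bar>int (snd a) - int (snd b)\<bar> = 1"
    "\<bar>int (fst b) - int (fst c)\<bar> + \<bar>int (snd b) - int (snd c)\<bar> = 1"
    "\<bar>int (fst c) - int (fst d)\<bar> + \<bar>int (snd c) - int (snd d)\<bar> = 1"
    "\<bar>int (fst d) - int (fst a)\<bar> + \<bar>int (snd d) - int (snd a)\<bar> = 1"
    "a \<noteq> c" "b \<noteq> d"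
  shows "\<exists>p q. {a,b,c,d} \<subseteq> {(p,q),(Suc p,q),(p,Suc q),(Suc p,Suc q)}"
proof -
  obtain a1 a2 b1 b2 c1 c2 d1 d2 where ab: "a = (a1,a2)" "b = (b1,b2)" "c = (c1,c2)" "d = (d1,d2)"
    by (cases a, cases b, cases c, cases d) auto
  define ux where "ux = int b1 - int a1"
  define uy where "uy = int b2 - int a2"
  define vx where "vx = int c1 - int b1"
  define vy where "vy = int c2 - int b2"
  define wx where "wx = int d1 - int c1"
  define wy where "wy = int d2 - int c2"
  have u: "\<bar>ux\<bar> + \<bar>uy\<bar> = 1" using assms(1) ab unfolding ux_def uy_def by (simp add: abs_minus_commute)
  have v: "\<bar>vx\<bar> + \<bar>vy\<bar> = 1" using assms(2) ab unfolding vx_def vy_def by (simp add: abs_minus_commute)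
  have w: "\<bar>wx\<bar> + \<bar>wy\<bar> = 1" using assms(3) ab unfolding wx_def wy_def by (simp add: abs_minus_commute)
  have zz: "\<bar>-(ux+vx+wx)\<bar> + \<bar>-(uy+vy+wy)\<bar> = 1" using assms(4) ab unfolding ux_def uy_def vx_def vy_def wx_def wy_def
    by (simp add: abs_minus_commute)
  have z: "(-(ux+vx+wx), -(uy+vy+wy)) \<in> U" using unitU[OF zz] unfolding U_def by auto
  have n1: "(ux+vx,uy+vy) \<noteq> (0,0)" using assms(5) ab unfolding ux_def uy_def vx_def vy_def by auto
  have n2: "(vx+wx,vy+wy) \<noteq> (0,0)" using assms(6) ab unfolding wx_def wy_def vx_def vy_def by auto
  have F: "\<bar>ux+vx\<bar> = 1 \<and> \<bar>uy+vy\<bar> = 1 \<and> (ux = 0 \<or> vx = 0) \<and> (uy = 0 \<or> vy = 0)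
     \<and> (wx = 0 \<or> ux+vx+wx = 0) \<and> (wy = 0 \<or> uy+vy+wy = 0)"
    using fin[OF unitU[OF u] unitU[OF v] unitU[OF w] z n1 n2] .
  have X1: "\<bar>int a1 - int c1\<bar> = 1" "\<bar>int a2 - int c2\<bar> = 1"
    using F unfolding ux_def uy_def vx_def vy_def by (simp_all add: abs_minus_commute)
  have X2: "b1 = a1 \<or> b1 = c1" "b2 = a2 \<or> b2 = c2" "d1 = a1 \<or> d1 = c1" "d2 = a2 \<or> d2 = c2"
    using F unfolding ux_def uy_def vx_def vy_def wx_def wy_def by auto
  have I: "\<And>x y. (x = a1 \<or> x = c1) \<Longrightarrow> (y = a2 \<or> y = c2) \<Longrightarrow>
     (x,y) \<in> {(min a1 c1,min a2 c2),(Suc (min a1 c1),min a2 c2),(min a1 c1,Suc (min a2 c2)),(Suc (min a1 c1),Suc (min a2 c2))}"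
  proof -
    fix x y assume "x = a1 \<or> x = c1" "y = a2 \<or> y = c2"
    then have "x = min a1 c1 \<or> x = Suc (min a1 c1)" "y = min a2 c2 \<or> y = Suc (min a2 c2)"
      using coord X1 by blast+
    then show "(x,y) \<in> {(min a1 c1,min a2 c2),(Suc (min a1 c1),min a2 c2),(min a1 c1,Suc (min a2 c2)),(Suc (min a1 c1),Suc (min a2 c2))}"
      by auto
  qed
  show ?thesis unfolding ab using I X2 by blast
qed


lemma q2_edge: "{(i::nat,j::nat),(i',j')} \<in> snd Q2" if "i \<in> {1..2}" "j \<in> {1..2}" "i' \<in> {1..2}" "j' \<in> {1..2}"
  "\<bar>int i - int i'\<bar> + \<bar>int j - int j'\<bar> = 1"
  using that unfolding Q2_def grid_def by auto

theorem lemma3: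
  fixes n1 n2 :: nat
  assumes "n1 \<ge> n2" and "n2 \<ge> 2"
  shows "magic_labeling (grid n1 n2) Q2 (lab n1 n2)
           (if odd n1 \<or> even n2 then 2 * (n1 * n2 + 1) else 2 * (n1 * n2 + 2))"
  unfolding magic_labeling_def
proof (intro conjI allI impI)
  have "card (fst (grid n1 n2)) = n1 * n2" unfolding grid_def by (simp add: card_cartesian_product)
  then show "bij_betw (lab n1 n2) (fst (grid n1 n2)) {1..card (fst (grid n1 n2))}"
    using lab_bij unfolding grid_def by simp
next
  fix H' assume "subgraph H' (grid n1 n2) \<and> graph_iso H' Q2"
  then have sg: "fst H' \<subseteq> fst (grid n1 n2)" "snd H' \<subseteq> snd (grid n1 n2)" and iso: "graph_iso H' Q2"
    unfolding subgraph_def by auto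
  obtain h where hb: "bij_betw h (fst H') (fst Q2)" and
    he: "\<forall>x \<in> fst H'. \<forall>y \<in> fst H'. {x, y} \<in> snd H' \<longleftrightarrow> {h x, h y} \<in> snd Q2"
    using iso unfolding graph_iso_def by blast
  have fQ: "fst Q2 = {1..2} \<times> {1..2}" unfolding Q2_def grid_def by simp
  have img: "h ` fst H' = {1..2} \<times> {1..2}" using hb fQ unfolding bij_betw_def by simp
  have inj: "inj_on h (fst H')" using hb unfolding bij_betw_def by simp
  obtain a where a: "a \<in> fst H'" "h a = (1,1)" using img by (metis (no_types, lifting) imageE mem_Sigma_iff atLeastAtMost_iff one_le_numeral order_refl)
  obtain b where b: "b \<in> fst H'" "h b = (1,2)" using img by (metis (no_types, lifting) imageE mem_Sigma_iff atLeastAtMost_iff one_le_numeral order_refl)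
  obtain c where c: "c \<in> fst H'" "h c = (2,2)" using img by (metis (no_types, lifting) imageE mem_Sigma_iff atLeastAtMost_iff one_le_numeral order_refl)
  obtain d where d: "d \<in> fst H'" "h d = (2,1)" using img by (metis (no_types, lifting) imageE mem_Sigma_iff atLeastAtMost_iff one_le_numeral order_refl)
  have V: "fst H' = {a,b,c,d}"
  proof
    show "{a,b,c,d} \<subseteq> fst H'" using a b c d by auto
    show "fst H' \<subseteq> {a,b,c,d}"
    proof
      fix x assume x: "x \<in> fst H'"
      then have "h x \<in> {1..2} \<times> {1..2}" using img by blast
      then have "h x = h a \<or> h x = h b \<or> h x = h c \<or> h x = h d" using a b c d
        by (auto simp: le_Suc_eq numeral_2_eq_2)
      moreover have "h x = h y \<Longrightarrow> y \<in> fst H' \<Longrightarrow> x = y" for y using inj x by (meson inj_onD)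
      ultimately show "x \<in> {a,b,c,d}" using a b c d by blast
    qed
  qed
  have dist: "a \<noteq> b" "a \<noteq> c" "a \<noteq> d" "b \<noteq> c" "b \<noteq> d" "c \<noteq> d" using a b c d by auto
  have eab: "{a,b} \<in> snd H'" using he a b q2_edge[of 1 1 1 2] by auto
  have ebc: "{b,c} \<in> snd H'" using he b c q2_edge[of 1 2 2 2] by auto
  have ecd: "{c,d} \<in> snd H'" using he c d q2_edge[of 2 2 2 1] by auto
  have eda: "{d,a} \<in> snd H'" using he d a q2_edge[of 2 1 1 1] by auto
  note G = grid_edge[OF subsetD[OF sg(2) eab]] grid_edge[OF subsetD[OF sg(2) ebc]]
     grid_edge[OF subsetD[OF sg(2) ecd]] grid_edge[OF subsetD[OF sg(2) eda]]
  obtain p q where pq: "{a,b,c,d} \<subseteq> {(p,q),(Suc p,q),(p,Suc q),(Suc p,Suc q)}"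
    using square[of a b c d] G dist by blast
  let ?S = "{(p,q),(Suc p,q),(p,Suc q),(Suc p,Suc q)}"
  have cS: "card ?S = 4" by simp
  have cV: "card {a,b,c,d} = 4" using dist by simp
  have VS: "fst H' = ?S" using V pq cS cV by (metis card_subset_eq finite.emptyI finite.insertI)
  have "?S \<subseteq> {1..n1} \<times> {1..n2}" using VS sg(1) unfolding grid_def by simp
  then have bnd: "1 \<le> p" "p < n1" "1 \<le> q" "q < n2" by auto
  have "(\<Sum>v\<in>fst H'. lab n1 n2 v) = lab n1 n2 (p,q) + lab n1 n2 (Suc p,q) + lab n1 n2 (p,Suc q) + lab n1 n2 (Suc p,Suc q)"
    unfolding VS by simp
  then show "(\<Sum>v\<in>fst H'. lab n1 n2 v) = (if odd n1 \<or> even n2 then 2 * (n1 * n2 + 1) else 2 * (n1 * n2 + 2))"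
    using magic_sum[OF bnd] by simp
qed

end
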